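(* Let $\mathcal U\subseteq M(\mathbb C)^g$ and $\mathcal V\subseteq M(\mathbb C)^{\tilde g}$ be non-commutative domains. If $f:\mathcal U\to\mathcal V$ is a proper analytic free map and $X\in\mathcal U(n)$, then the derivative $f'(X)=f[n]'(X):M_n(\mathbb C)^g\to M_n(\mathbb C)^{\tilde g}$ is one-to-one. In particular, if $g=\tilde g$, then $f'(X)$ is a vector space isomorphism.
   Context: $M_n(\mathbb C)^g$ denotes $g$-tuples of $n\times n$ complex matrices; products with matrices, unitary conjugation and direct sums of tuples are taken entrywise (direct sums block diagonally). A non-commutative set $\mathcal U\subseteq M(\mathbb C)^g$ is a sequence $(\mathcal U(n))_n$, $\mathcal U(n)\subseteq M_n(\mathbb C)^g$, closed under simultaneous unitary similarity $X\mapsto U^*XU$ and under direct sums; it is a non-commutative domain if each $\mathcal U(n)$ is open and connected. A free map $f:\mathcal U\to\mathcal V$ is a sequence of functions $f[n]:\mathcal U(n)\to\mathcal V(n)$ such that whenever $X\in\mathcal U(n)$, $Y\in\mathcal U(m)$, $\Gamma\in\mathbb C^{n\times m}$ with $X\Gamma=\Gamma Y$, then $f[n](X)\Gamma=\Gamma f[m](Y)$. It is an analytic free map if each $f[n]$ is holomorphic, and proper if each $f[n]:\mathcal U(n)\to\mathcal V(n)$ is proper (preimages of compact sets are compact). *)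

theory Defs
  imports "HOL-Analysis.Analysis"
begin

text \<open>A g-tuple of n x n complex matrices is encoded as a function
  X :: nat => nat => nat => complex, where X k i j is the (i,j) entry of the
  k-th matrix (k < g, i,j < n), all other values being 0.
  The ambient topology is the product topology on the function space, which on
  the finite-dimensional carrier ntup g n is the usual Euclidean topology.\<close>

type_synonym tup = "nat \<Rightarrow> nat \<Rightarrow> nat \<Rightarrow> complex"
type_synonym cmat = "nat \<Rightarrow> nat \<Rightarrow> complex"

definition ntup :: "nat \<Rightarrow> nat \<Rightarrow> tup set" where
  "ntup g n = {X. \<forall>k i j. (g \<le> k \<or> n \<le> i \<or> n \<le> j) \<longrightarrow> X k i j = 0}"

definition cmats :: "nat \<Rightarrow> nat \<Rightarrow> cmat set" where
  "cmats n m = {G. \<forall>i j. (n \<le> i \<or> m \<le> j) \<longrightarrow> G i j = 0}"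

definition tadd :: "tup \<Rightarrow> tup \<Rightarrow> tup" where
  "tadd X Y = (\<lambda>k i j. X k i j + Y k i j)"

definition tsub :: "tup \<Rightarrow> tup \<Rightarrow> tup" where
  "tsub X Y = (\<lambda>k i j. X k i j - Y k i j)"

definition tscale :: "complex \<Rightarrow> tup \<Rightarrow> tup" where
  "tscale a X = (\<lambda>k i j. a * X k i j)"

definition tnorm :: "nat \<Rightarrow> nat \<Rightarrow> tup \<Rightarrow> real" where
  "tnorm g n X = sqrt (\<Sum>k<g. \<Sum>i<n. \<Sum>j<n. (cmod (X k i j))\<^sup>2)"

definition rmul :: "nat \<Rightarrow> tup \<Rightarrow> cmat \<Rightarrow> tup" where
  "rmul n X G = (\<lambda>k i j. \<Sum>l<n. X k i l * G l j)"

definition lmul :: "nat \<Rightarrow> cmat \<Rightarrow> tup \<Rightarrow> tup" where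
  "lmul m G Y = (\<lambda>k i j. \<Sum>l<m. G i l * Y k l j)"

definition unitary :: "nat \<Rightarrow> cmat \<Rightarrow> bool" where
  "unitary n U \<longleftrightarrow> U \<in> cmats n n \<and>
     (\<forall>i<n. \<forall>j<n. (\<Sum>l<n. cnj (U l i) * U l j) = (if i = j then 1 else 0))"

definition uconj :: "nat \<Rightarrow> cmat \<Rightarrow> tup \<Rightarrow> tup" where
  "uconj n U X = (\<lambda>k i j. \<Sum>a<n. \<Sum>b<n. cnj (U a i) * X k a b * U b j)"

definition dsum :: "nat \<Rightarrow> tup \<Rightarrow> tup \<Rightarrow> tup" where
  "dsum n X Y = (\<lambda>k i j. if i < n \<and> j < n then X k i j
                         else if n \<le> i \<and> n \<le> j then Y k (i - n) (j - n) else 0)"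

definition nc_set :: "nat \<Rightarrow> (nat \<Rightarrow> tup set) \<Rightarrow> bool" where
  "nc_set g U \<longleftrightarrow>
     (\<forall>n\<ge>1. U n \<subseteq> ntup g n) \<and>
     (\<forall>n\<ge>1. \<forall>X\<in>U n. \<forall>W. unitary n W \<longrightarrow> uconj n W X \<in> U n) \<and>
     (\<forall>n\<ge>1. \<forall>m\<ge>1. \<forall>X\<in>U n. \<forall>Y\<in>U m. dsum n X Y \<in> U (n + m))"

definition nc_domain :: "nat \<Rightarrow> (nat \<Rightarrow> tup set) \<Rightarrow> bool" where
  "nc_domain g U \<longleftrightarrow> nc_set g U \<and>
     (\<forall>n\<ge>1. openin (top_of_set (ntup g n)) (U n) \<and> connected (U n))"

definition free_map ::
  "nat \<Rightarrow> nat \<Rightarrow> (nat \<Rightarrow> tup set) \<Rightarrow> (nat \<Rightarrow> tup set) \<Rightarrow> (nat \<Rightarrow> tup \<Rightarrow> tup) \<Rightarrow> bool" where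
  "free_map g h U V f \<longleftrightarrow>
     (\<forall>n\<ge>1. \<forall>X\<in>U n. f n X \<in> V n) \<and>
     (\<forall>n\<ge>1. \<forall>m\<ge>1. \<forall>X\<in>U n. \<forall>Y\<in>U m. \<forall>G\<in>cmats n m.
        rmul n X G = lmul m G Y \<longrightarrow> rmul n (f n X) G = lmul m G (f m Y))"

definition tlinear :: "nat \<Rightarrow> nat \<Rightarrow> nat \<Rightarrow> (tup \<Rightarrow> tup) \<Rightarrow> bool" where
  "tlinear g h n L \<longleftrightarrow> (\<forall>H\<in>ntup g n. L H \<in> ntup h n) \<and>
     (\<forall>a. \<forall>H1\<in>ntup g n. \<forall>H2\<in>ntup g n.
        L (tadd (tscale a H1) H2) = tadd (tscale a (L H1)) (L H2))"

definition has_tderiv ::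
  "nat \<Rightarrow> nat \<Rightarrow> nat \<Rightarrow> tup set \<Rightarrow> (tup \<Rightarrow> tup) \<Rightarrow> tup \<Rightarrow> (tup \<Rightarrow> tup) \<Rightarrow> bool" where
  "has_tderiv g h n S F X L \<longleftrightarrow> tlinear g h n L \<and>
     (\<forall>e>0. \<exists>d>0. \<forall>H\<in>ntup g n. tadd X H \<in> S \<and> tnorm g n H < d \<longrightarrow>
        tnorm h n (tsub (tsub (F (tadd X H)) (F X)) (L H)) \<le> e * tnorm g n H)"

definition analytic_free_map ::
  "nat \<Rightarrow> nat \<Rightarrow> (nat \<Rightarrow> tup set) \<Rightarrow> (nat \<Rightarrow> tup set) \<Rightarrow> (nat \<Rightarrow> tup \<Rightarrow> tup) \<Rightarrow> bool" where
  "analytic_free_map g h U V f \<longleftrightarrow> free_map g h U V f \<and>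
     (\<forall>n\<ge>1. \<forall>X\<in>U n. \<exists>L. has_tderiv g h n (U n) (f n) X L)"

definition proper_free_map ::
  "nat \<Rightarrow> nat \<Rightarrow> (nat \<Rightarrow> tup set) \<Rightarrow> (nat \<Rightarrow> tup set) \<Rightarrow> (nat \<Rightarrow> tup \<Rightarrow> tup) \<Rightarrow> bool" where
  "proper_free_map g h U V f \<longleftrightarrow>
     (\<forall>n\<ge>1. \<forall>K. K \<subseteq> V n \<and> compact K \<longrightarrow> compact {X \<in> U n. f n X \<in> K})"

end

theory Submission imports Defs "HOL-Library.Function_Algebras" begin

lemma ntup_zero: "X \<in> ntup g n \<Longrightarrow> g \<le> k \<or> n \<le> i \<or> n \<le> j \<Longrightarrow> X k i j = 0"
  by (auto simp: ntup_def)

lemma ntup_shr: "X \<in> ntup g n \<Longrightarrow> 2*n \<le> i \<Longrightarrow> X k (i - n) j = 0"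
  by (auto simp: ntup_def)
lemma ntup_shc: "X \<in> ntup g n \<Longrightarrow> 2*n \<le> j \<Longrightarrow> X k i (j - n) = 0"
  by (auto simp: ntup_def)

lemma ntupI: "(\<And>k i j. g \<le> k \<or> n \<le> i \<or> n \<le> j \<Longrightarrow> X k i j = 0) \<Longrightarrow> X \<in> ntup g n"
  by (simp add: ntup_def)

lemma coord_le_tnorm:
  assumes "k < g" "i < n" "j < n"
  shows "cmod (X k i j) \<le> tnorm g n X"
proof -
  have "(cmod (X k i j))\<^sup>2 \<le> (\<Sum>j'<n. (cmod (X k i j'))\<^sup>2)"
    using assms by (intro member_le_sum) auto
  also have "\<dots> \<le> (\<Sum>i'<n. \<Sum>j'<n. (cmod (X k i' j'))\<^sup>2)"
    using assms by (intro member_le_sum[where f="\<lambda>i'. \<Sum>j'<n. (cmod (X k i' j'))\<^sup>2"]) (auto intro!: sum_nonneg)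
  also have "\<dots> \<le> (\<Sum>k'<g. \<Sum>i'<n. \<Sum>j'<n. (cmod (X k' i' j'))\<^sup>2)"
    using assms by (intro member_le_sum[where f="\<lambda>k'. \<Sum>i'<n. \<Sum>j'<n. (cmod (X k' i' j'))\<^sup>2"]) (auto intro!: sum_nonneg)
  finally show ?thesis unfolding tnorm_def
    by (metis norm_ge_zero real_le_rsqrt)
qed

lemma tnorm_scale: "tnorm g n (tscale s V) = cmod s * tnorm g n V"
proof -
  have "(\<Sum>k<g. \<Sum>i<n. \<Sum>j<n. (cmod (s * V k i j))\<^sup>2) = (cmod s)\<^sup>2 * (\<Sum>k<g. \<Sum>i<n. \<Sum>j<n. (cmod (V k i j))\<^sup>2)"
    by (simp add: sum_distrib_left norm_mult power_mult_distrib)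
  then show ?thesis unfolding tnorm_def tscale_def by (simp add: real_sqrt_mult)
qed

lemma tnorm_nonneg: "0 \<le> tnorm g n V"
  unfolding tnorm_def by (auto intro!: sum_nonneg)

lemma tlinear_zero: assumes "tlinear g h n L" shows "L (\<lambda>k i j. 0) = (\<lambda>k i j. 0)"
proof -
  have z: "(\<lambda>k i j. 0::complex) \<in> ntup g n" by (simp add: ntup_def)
  have "L (tadd (tscale 1 (\<lambda>k i j. 0)) (\<lambda>k i j. 0)) = tadd (tscale 1 (L (\<lambda>k i j. 0))) (L (\<lambda>k i j. 0))"
    using assms z unfolding tlinear_def by blast
  moreover have "tadd (tscale 1 (\<lambda>k i j. 0)) (\<lambda>k i j. 0) = (\<lambda>k i j. 0::complex)" by (simp add: tadd_def tscale_def)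
  ultimately have "L (\<lambda>k i j. 0) = tadd (L (\<lambda>k i j. 0)) (L (\<lambda>k i j. 0))" by (simp add: tscale_def)
  then show ?thesis unfolding tadd_def by (metis add_cancel_left_right)
qed

lemma tlinear_scale: assumes "tlinear g h n L" "V \<in> ntup g n"
  shows "L (tscale s V) = tscale s (L V)"
proof -
  have z: "(\<lambda>k i j. 0::complex) \<in> ntup g n" by (simp add: ntup_def)
  have "L (tadd (tscale s V) (\<lambda>k i j. 0)) = tadd (tscale s (L V)) (L (\<lambda>k i j. 0))"
    using assms z unfolding tlinear_def by blast
  then show ?thesis using tlinear_zero[OF assms(1)] by (simp add: tadd_def)
qed

lemma tlinear_add: assumes "tlinear g h n L" "V \<in> ntup g n" "W \<in> ntup g n"
  shows "L (tadd V W) = tadd (L V) (L W)"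
proof -
  have "L (tadd (tscale 1 V) W) = tadd (tscale 1 (L V)) (L W)"
    using assms unfolding tlinear_def by blast
  moreover have "tscale 1 V = V" "tscale 1 (L V) = L V" by (auto simp: tscale_def)
  ultimately show ?thesis by simp
qed

lemma ntup_tadd: "V \<in> ntup g n \<Longrightarrow> W \<in> ntup g n \<Longrightarrow> tadd V W \<in> ntup g n"
  by (simp add: ntup_def tadd_def)
lemma ntup_tscale: "V \<in> ntup g n \<Longrightarrow> tscale s V \<in> ntup g n"
  by (simp add: ntup_def tscale_def)

lemma tderiv_dir:
  assumes D: "has_tderiv g h N S F P L2" and V: "V \<in> ntup g N"
    and idx: "k < h" "i < N" "j < N" and e: "e > 0"
  shows "\<exists>d>0. \<forall>s. cmod s < d \<longrightarrow> tadd P (tscale s V) \<in> S \<longrightarrow>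
     cmod ((F (tadd P (tscale s V)) k i j - F P k i j) - s * L2 V k i j) \<le> e * cmod s"
proof -
  define c where "c = tnorm g N V + 1"
  have c: "c > 0" "tnorm g N V \<le> c" using tnorm_nonneg[of g N V] unfolding c_def by linarith+
  have ec: "e / c > 0" using e c by simp
  have "\<forall>e>0. \<exists>d>0. \<forall>H\<in>ntup g N. tadd P H \<in> S \<and> tnorm g N H < d \<longrightarrow>
        tnorm h N (tsub (tsub (F (tadd P H)) (F P)) (L2 H)) \<le> e * tnorm g N H"
    using D unfolding has_tderiv_def by (rule conjunct2)
  then obtain d0 where d0: "d0 > 0" and H: "\<forall>H\<in>ntup g N. tadd P H \<in> S \<and> tnorm g N H < d0 \<longrightarrow>
        tnorm h N (tsub (tsub (F (tadd P H)) (F P)) (L2 H)) \<le> (e / c) * tnorm g N H"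
    using ec by blast
  have lin: "tlinear g h N L2" using D unfolding has_tderiv_def by (rule conjunct1)
  show ?thesis
  proof (intro exI[of _ "d0 / c"] conjI allI impI)
    show "d0 / c > 0" using d0 c by simp
    fix s assume s: "cmod s < d0 / c" and inS: "tadd P (tscale s V) \<in> S"
    have "tnorm g N (tscale s V) = cmod s * tnorm g N V" by (rule tnorm_scale)
    also have "\<dots> \<le> cmod s * c" by (rule mult_left_mono[OF c(2) norm_ge_zero])
    also have "\<dots> < d0" using s c by (simp add: pos_less_divide_eq)
    finally have lt: "tnorm g N (tscale s V) < d0" .
    have b: "tnorm h N (tsub (tsub (F (tadd P (tscale s V))) (F P)) (L2 (tscale s V))) \<le> (e / c) * tnorm g N (tscale s V)"
      using H ntup_tscale[OF V] inS lt by blast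
    have "L2 (tscale s V) = tscale s (L2 V)" by (rule tlinear_scale[OF lin V])
    then have eq: "(tsub (tsub (F (tadd P (tscale s V))) (F P)) (L2 (tscale s V))) k i j
        = (F (tadd P (tscale s V)) k i j - F P k i j) - s * L2 V k i j"
      by (simp add: tsub_def tscale_def)
    have "cmod ((F (tadd P (tscale s V)) k i j - F P k i j) - s * L2 V k i j) \<le> (e / c) * tnorm g N (tscale s V)"
      using coord_le_tnorm[OF idx, of "tsub (tsub (F (tadd P (tscale s V))) (F P)) (L2 (tscale s V))"] b
      unfolding eq by linarith
    also have "\<dots> = (e / c) * (cmod s * tnorm g N V)" by (simp only: tnorm_scale)
    also have "\<dots> \<le> (e / c) * (cmod s * c)"
      by (rule mult_left_mono[OF mult_left_mono[OF c(2) norm_ge_zero]]) (use ec in simp)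
    also have "\<dots> = e * cmod s" using c by simp
    finally show "cmod ((F (tadd P (tscale s V)) k i j - F P k i j) - s * L2 V k i j) \<le> e * cmod s" .
  qed
qed

lemma sum_single:
  fixes N a :: nat
  assumes "\<And>l. l < N \<Longrightarrow> l \<noteq> a \<Longrightarrow> t l = 0"
  shows "(\<Sum>l<N. t l) = (if a < N then t a else (0::complex))"
proof (cases "a < N")
  case True
  have "(\<Sum>l<N. t l) = t a + (\<Sum>l\<in>{..<N} - {a}. t l)"
    by (rule sum.remove) (use True in auto)
  also have "(\<Sum>l\<in>{..<N} - {a}. t l) = 0" using assms by (intro sum.neutral) auto
  finally show ?thesis using True by simp
next
  case False
  have "(\<Sum>l<N. t l) = 0" by (rule sum.neutral) (use assms False in auto)
  then show ?thesis using False by simp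
qed

definition Mblk :: "nat \<Rightarrow> tup \<Rightarrow> tup \<Rightarrow> tup \<Rightarrow> tup" where
  "Mblk n A C B = (\<lambda>k i j. if i < n \<and> j < n then A k i j else if i < n \<and> n \<le> j then C k i (j - n)
      else if n \<le> i \<and> n \<le> j then B k (i - n) (j - n) else 0)"

definition tzero :: tup where "tzero = (\<lambda>k i j. 0)"

lemma dsum_Mblk: "dsum n A B = Mblk n A tzero B"
  by (auto simp: dsum_def Mblk_def tzero_def fun_eq_iff)

lemma Mblk_lin: "tadd (Mblk n A C B) (tscale s (Mblk n A' C' B')) =
   Mblk n (tadd A (tscale s A')) (tadd C (tscale s C')) (tadd B (tscale s B'))"
  by (auto simp: Mblk_def tadd_def tscale_def fun_eq_iff)

lemma Mblk_ntup: "A \<in> ntup g n \<Longrightarrow> C \<in> ntup g n \<Longrightarrow> B \<in> ntup g n \<Longrightarrow> Mblk n A C B \<in> ntup g (2*n)"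
  by (auto simp: Mblk_def ntup_def)

lemma tzero_ntup[simp]: "tzero \<in> ntup g n" by (simp add: tzero_def ntup_def)

context
  fixes g h :: nat and U V :: "nat \<Rightarrow> tup set" and f :: "nat \<Rightarrow> tup \<Rightarrow> tup"
  assumes fm: "free_map g h U V f" and ncU: "nc_set g U" and ncV: "nc_set h V"
begin

lemma fm_apply:
  assumes "N \<ge> 1" "M \<ge> 1" "W \<in> U N" "Y \<in> U M" "G \<in> cmats N M" "rmul N W G = lmul M G Y"
  shows "rmul N (f N W) G = lmul M G (f M Y)"
proof -
  have "\<forall>n\<ge>1. \<forall>m\<ge>1. \<forall>X\<in>U n. \<forall>Y\<in>U m. \<forall>G\<in>cmats n m.
        rmul n X G = lmul m G Y \<longrightarrow> rmul n (f n X) G = lmul m G (f m Y)"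
    using fm unfolding free_map_def by (rule conjunct2)
  from this[rule_format, OF assms] show ?thesis .
qed

lemma U_ntup: assumes "N \<ge> 1" "W \<in> U N" shows "W \<in> ntup g N"
proof -
  have "\<forall>n\<ge>1. U n \<subseteq> ntup g n" using ncU unfolding nc_set_def by (rule conjunct1)
  then show ?thesis using assms by auto
qed

lemma f_ntup: assumes "N \<ge> 1" "W \<in> U N" shows "f N W \<in> ntup h N"
proof -
  have "\<forall>n\<ge>1. V n \<subseteq> ntup h n" using ncV unfolding nc_set_def by (rule conjunct1)
  moreover have "\<forall>n\<ge>1. \<forall>X\<in>U n. f n X \<in> V n" using fm unfolding free_map_def by (rule conjunct1)
  ultimately show ?thesis using assms by blast
qed

lemma col1:
  assumes n: "n \<ge> 1" and W: "Mblk n A C B \<in> U (2*n)" and A: "A \<in> U n"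
    and C: "C \<in> ntup g n" and B: "B \<in> ntup g n" and j: "j < n"
  shows "f (2*n) (Mblk n A C B) k i j = (if i < n then f n A k i j else 0)"
proof -
  define G :: cmat where "G = (\<lambda>l j. if l = j \<and> j < n then 1 else 0)"
  have Gc: "G \<in> cmats (2*n) n" by (auto simp: G_def cmats_def)
  have An: "A \<in> ntup g n" using U_ntup[OF n A] .
  have r: "rmul (2*n) W' G k i j = (if j < n then W' k i j else 0)" for W' k i j
    unfolding rmul_def G_def by (subst sum_single[where a=j]) auto
  have l: "lmul n G A' k i j = (if i < n then A' k i j else 0)" for A' k i j
    unfolding lmul_def G_def by (subst sum_single[where a=i]) auto
  have "rmul (2*n) (Mblk n A C B) G = lmul n G A"
  proof (intro ext)
    fix k i j
    show "rmul (2*n) (Mblk n A C B) G k i j = lmul n G A k i j"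
    proof (cases "j < n")
      case True then show ?thesis unfolding r l by (simp add: Mblk_def)
    next
      case False then show ?thesis unfolding r l using ntup_zero[OF An, of k i j] by simp
    qed
  qed
  then have e: "rmul (2*n) (f (2*n) (Mblk n A C B)) G = lmul n G (f n A)"
    using fm_apply[OF _ n W A Gc] n by simp
  have "rmul (2*n) (f (2*n) (Mblk n A C B)) G k i j = lmul n G (f n A) k i j" by (simp add: e)
  then show ?thesis using j unfolding r l by simp
qed

lemma row2:
  assumes n: "n \<ge> 1" and W: "Mblk n A C B \<in> U (2*n)" and B: "B \<in> U n"
    and C: "C \<in> ntup g n" and A: "A \<in> ntup g n" and i: "n \<le> i"
  shows "f (2*n) (Mblk n A C B) k i j = (if n \<le> j then f n B k (i - n) (j - n) else 0)"
proof -
  define G :: cmat where "G = (\<lambda>i l. if l = i + n \<and> i < n then 1 else 0)"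
  have Gc: "G \<in> cmats n (2*n)" by (auto simp: G_def cmats_def)
  have Bn: "B \<in> ntup g n" using U_ntup[OF n B] .
  have r: "rmul n B' G k i j = (if n \<le> j \<and> j - n < n then B' k i (j - n) else 0)" for B' k i j
    unfolding rmul_def G_def by (subst sum_single[where a="j - n"]) auto
  have l: "lmul (2*n) G W' k i j = (if i < n then W' k (i + n) j else 0)" for W' k i j
    unfolding lmul_def G_def by (subst sum_single[where a="i + n"]) auto
  have "rmul n B G = lmul (2*n) G (Mblk n A C B)"
  proof (intro ext)
    fix k i j
    show "rmul n B G k i j = lmul (2*n) G (Mblk n A C B) k i j"
    proof (cases "i < n")
      case True then show ?thesis unfolding r l using ntup_zero[OF Bn, of k i "j - n"] by (simp add: Mblk_def)
    next
      case False then show ?thesis unfolding r l using ntup_zero[OF Bn, of k i "j - n"] by simp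
    qed
  qed
  then have e: "rmul n (f n B) G = lmul (2*n) G (f (2*n) (Mblk n A C B))"
    using fm_apply[OF n _ B W Gc] n by simp
  have fB: "f n B \<in> ntup h n" using f_ntup[OF n B] .
  have fW: "f (2*n) (Mblk n A C B) \<in> ntup h (2*n)" using f_ntup[OF _ W] n by simp
  show ?thesis
  proof (cases "i < 2*n")
    case True
    then have "f (2*n) (Mblk n A C B) k (i - n + n) j = (if n \<le> j \<and> j - n < n then f n B k (i - n) (j - n) else 0)"
      using fun_cong[OF fun_cong[OF fun_cong[OF e, of k], of "i - n"], of j] i by (simp add: r l)
    then show ?thesis using i fB by (auto simp: ntup_zero)
  next
    case False
    then have "n \<le> i - n" by simp
    then show ?thesis using False ntup_zero[OF fW, of k i j] ntup_zero[OF fB, of k "i - n" "j - n"] by simp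
  qed
qed

lemma ur_dsum:
  assumes n: "n \<ge> 1" and W: "Mblk n A tzero B \<in> U (2*n)" and B: "B \<in> U n" and A: "A \<in> ntup g n"
    and i: "i < n" and j: "j < n"
  shows "f (2*n) (Mblk n A tzero B) k i (j + n) = 0"
proof -
  define G :: cmat where "G = (\<lambda>l j. if l = j + n \<and> j < n then 1 else 0)"
  have Gc: "G \<in> cmats (2*n) n" by (auto simp: G_def cmats_def)
  have Bn: "B \<in> ntup g n" using U_ntup[OF n B] .
  have r: "rmul (2*n) W' G k i j = (if j < n then W' k i (j + n) else 0)" for W' k i j
    unfolding rmul_def G_def by (subst sum_single[where a="j + n"]) auto
  have l: "lmul n G B' k i j = (if n \<le> i \<and> i - n < n then B' k (i - n) j else 0)" for B' k i j
    unfolding lmul_def G_def by (subst sum_single[where a="i - n"]) auto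
  have "rmul (2*n) (Mblk n A tzero B) G = lmul n G B"
  proof (intro ext)
    fix k i j
    show "rmul (2*n) (Mblk n A tzero B) G k i j = lmul n G B k i j"
    proof (cases "j < n")
      case True then show ?thesis unfolding r l using ntup_zero[OF Bn, of k "i - n" j]
        by (simp add: Mblk_def tzero_def)
    next
      case False then show ?thesis unfolding r l using ntup_zero[OF Bn, of k "i - n" j] by simp
    qed
  qed
  then have e: "rmul (2*n) (f (2*n) (Mblk n A tzero B)) G = lmul n G (f n B)"
    using fm_apply[OF _ n W B Gc] n by simp
  have "rmul (2*n) (f (2*n) (Mblk n A tzero B)) G k i j = lmul n G (f n B) k i j" by (simp add: e)
  then show ?thesis using i j unfolding r l by simp
qed

lemma scale_rel:
  assumes n: "n \<ge> 1" and X: "X \<in> U n" and H: "H \<in> ntup g n"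
    and Wt: "Mblk n X (tscale t H) X \<in> U (2*n)" and Ws: "Mblk n X (tscale s H) X \<in> U (2*n)"
    and cts: "c * t = s" and i: "i < n" and j: "n \<le> j" "j < 2*n"
  shows "f (2*n) (Mblk n X (tscale t H) X) k i j * c = f (2*n) (Mblk n X (tscale s H) X) k i j"
proof -
  define G :: cmat where "G = (\<lambda>l j. if l = j \<and> j < 2*n then (if j < n then 1 else c) else 0)"
  have Gc: "G \<in> cmats (2*n) (2*n)" by (auto simp: G_def cmats_def)
  have Xn: "X \<in> ntup g n" using U_ntup[OF n X] .
  have r: "rmul (2*n) W' G k i j = (if j < 2*n then W' k i j * (if j < n then 1 else c) else 0)" for W' k i j
    unfolding rmul_def G_def by (subst sum_single[where a="j"]) auto
  have l: "lmul (2*n) G W' k i j = (if i < 2*n then (if i < n then 1 else c) * W' k i j else 0)" for W' k i j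
    unfolding lmul_def G_def by (subst sum_single[where a="i"]) auto
  have "rmul (2*n) (Mblk n X (tscale t H) X) G = lmul (2*n) G (Mblk n X (tscale s H) X)"
  proof (intro ext)
    fix k i j
    show "rmul (2*n) (Mblk n X (tscale t H) X) G k i j = lmul (2*n) G (Mblk n X (tscale s H) X) k i j"
      unfolding r l using cts
      by (cases "i < n"; cases "j < n"; cases "i < 2*n"; cases "j < 2*n")
         (auto simp: Mblk_def tscale_def ntup_shr[OF Xn] ntup_shc[OF Xn] ntup_shc[OF H])
  qed
  then have e: "rmul (2*n) (f (2*n) (Mblk n X (tscale t H) X)) G = lmul (2*n) G (f (2*n) (Mblk n X (tscale s H) X))"
    using fm_apply[OF _ _ Wt Ws Gc] n by simp
  have "rmul (2*n) (f (2*n) (Mblk n X (tscale t H) X)) G k i j = lmul (2*n) G (f (2*n) (Mblk n X (tscale s H) X)) k i j"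
    by (simp add: e)
  then show ?thesis using i j unfolding r l by simp
qed

lemma shift_rel:
  assumes n: "n \<ge> 1" and X: "X \<in> U n" and Y: "Y \<in> U n"
    and M: "Mblk n Y (tsub Y X) X \<in> U (2*n)" and D: "Mblk n Y tzero X \<in> U (2*n)"
    and i: "i < n" and j: "j < n"
  shows "f (2*n) (Mblk n Y (tsub Y X) X) k i (j + n) = f n Y k i j - f n X k i j"
proof -
  define G :: cmat where "G = (\<lambda>l j. (if l = j \<and> j < 2*n then 1 else 0) + (if l + n = j \<and> l < n then 1 else 0))"
  have Gc: "G \<in> cmats (2*n) (2*n)" by (auto simp: G_def cmats_def)
  have Xn: "X \<in> ntup g n" using U_ntup[OF n X] .
  have Yn: "Y \<in> ntup g n" using U_ntup[OF n Y] .
  have r: "rmul (2*n) W' G k i j = (if j < 2*n then W' k i j else 0) + (if n \<le> j \<and> j - n < n then W' k i (j - n) else 0)" for W' k i j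
  proof -
    have "rmul (2*n) W' G k i j = (\<Sum>l<2*n. W' k i l * (if l = j \<and> j < 2*n then 1 else 0))
       + (\<Sum>l<2*n. W' k i l * (if l + n = j \<and> l < n then 1 else 0))"
      unfolding rmul_def G_def by (simp add: distrib_left sum.distrib)
    also have "(\<Sum>l<2*n. W' k i l * (if l = j \<and> j < 2*n then 1 else 0)) = (if j < 2*n then W' k i j else 0)"
      by (subst sum_single[where a="j"]) auto
    also have "(\<Sum>l<2*n. W' k i l * (if l + n = j \<and> l < n then 1 else 0)) = (if n \<le> j \<and> j - n < n then W' k i (j - n) else 0)"
      by (subst sum_single[where a="j - n"]) auto
    finally show ?thesis .
  qed
  have l: "lmul (2*n) G W' k i j = (if i < 2*n then W' k i j else 0) + (if i < n then W' k (i + n) j else 0)" for W' k i j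
  proof -
    have "lmul (2*n) G W' k i j = (\<Sum>l<2*n. (if i = l \<and> l < 2*n then 1 else 0) * W' k l j)
       + (\<Sum>l<2*n. (if i + n = l \<and> i < n then 1 else 0) * W' k l j)"
      unfolding lmul_def G_def by (simp add: distrib_right sum.distrib)
    also have "(\<Sum>l<2*n. (if i = l \<and> l < 2*n then 1 else 0) * W' k l j) = (if i < 2*n then W' k i j else 0)"
      by (subst sum_single[where a="i"]) auto
    also have "(\<Sum>l<2*n. (if i + n = l \<and> i < n then 1 else 0) * W' k l j) = (if i < n then W' k (i + n) j else 0)"
      by (subst sum_single[where a="i + n"]) auto
    finally show ?thesis .
  qed
  have "rmul (2*n) (Mblk n Y tzero X) G = lmul (2*n) G (Mblk n Y (tsub Y X) X)"
  proof (intro ext)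
    fix k i j
    show "rmul (2*n) (Mblk n Y tzero X) G k i j = lmul (2*n) G (Mblk n Y (tsub Y X) X) k i j"
      unfolding r l
      by (cases "i < n"; cases "j < n"; cases "i < 2*n"; cases "j < 2*n")
         (auto simp: Mblk_def tsub_def tzero_def ntup_shr[OF Xn] ntup_shc[OF Xn] ntup_shc[OF Yn])
  qed
  then have e: "rmul (2*n) (f (2*n) (Mblk n Y tzero X)) G = lmul (2*n) G (f (2*n) (Mblk n Y (tsub Y X) X))"
    using fm_apply[OF _ _ D M Gc] n by simp
  have "rmul (2*n) (f (2*n) (Mblk n Y tzero X)) G k i (j + n) = lmul (2*n) G (f (2*n) (Mblk n Y (tsub Y X) X)) k i (j + n)"
    by (simp add: e)
  then have eq: "f (2*n) (Mblk n Y tzero X) k i (j + n) + f (2*n) (Mblk n Y tzero X) k i j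
      = f (2*n) (Mblk n Y (tsub Y X) X) k i (j + n) + f (2*n) (Mblk n Y (tsub Y X) X) k (i + n) (j + n)"
    using i j unfolding r l by simp
  have tX: "tsub Y X \<in> ntup g n" using Xn Yn by (auto simp: ntup_def tsub_def)
  have 1: "f (2*n) (Mblk n Y tzero X) k i (j + n) = 0" by (rule ur_dsum[OF n D X Yn i j])
  have 2: "f (2*n) (Mblk n Y tzero X) k i j = f n Y k i j" using col1[OF n D Y tzero_ntup Xn j] i by simp
  have 3: "f (2*n) (Mblk n Y (tsub Y X) X) k (i + n) (j + n) = f n X k i j"
    using row2[OF n M X tX Yn, of "i + n" k "j + n"] by simp
  show ?thesis using eq 1 2 3 by (simp add: algebra_simps)
qed

end


lemma tadd_tzero_scale[simp]: "tadd X (tscale t tzero) = X" by (simp add: tadd_def tscale_def tzero_def)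
lemma tzero_tadd_scale[simp]: "tadd tzero (tscale t H) = tscale t H" by (simp add: tadd_def tscale_def tzero_def)
lemma tadd_tzero[simp]: "tadd A tzero = A" by (simp add: tadd_def tzero_def)
lemma tscale_zero[simp]: "tscale 0 H = tzero" by (simp add: tscale_def tzero_def)
lemma tsub_line: "tsub (tadd X (tscale s H)) X = tscale s H" by (simp add: tsub_def tadd_def tscale_def)

lemma cont_line: "continuous_on UNIV (\<lambda>s::complex. tadd A (tscale s V))"
  unfolding tadd_def tscale_def
  by (intro continuous_on_coordinatewise_then_product continuous_intros)

lemma line_in:
  assumes op: "openin (top_of_set (ntup g N)) S" and A: "A \<in> S" and V: "V \<in> ntup g N"
  shows "\<exists>d>0. \<forall>s. cmod s < d \<longrightarrow> tadd A (tscale s V) \<in> S"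
proof -
  obtain Op where Op: "open Op" "S = ntup g N \<inter> Op" using op unfolding openin_open by blast
  have An: "A \<in> ntup g N" using A Op by blast
  have "open ((\<lambda>s::complex. tadd A (tscale s V)) -` Op)" by (rule open_vimage[OF Op(1) cont_line])
  moreover have "0 \<in> (\<lambda>s::complex. tadd A (tscale s V)) -` Op" using A Op by simp
  ultimately obtain d where d: "d > 0" "ball 0 d \<subseteq> (\<lambda>s::complex. tadd A (tscale s V)) -` Op"
    using open_contains_ball by blast
  show ?thesis
  proof (intro exI[of _ d] conjI allI impI)
    show "d > 0" by fact
    fix s :: complex assume "cmod s < d"
    then have "tadd A (tscale s V) \<in> Op" using d by auto
    moreover have "tadd A (tscale s V) \<in> ntup g N" by (intro ntup_tadd ntup_tscale An V)
    ultimately show "tadd A (tscale s V) \<in> S" using Op by blast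
  qed
qed

lemma dir_eq:
  assumes D: "has_tderiv g h N S F P L2" and V: "V \<in> ntup g N"
    and idx: "k < h" "i < N" "j < N" and d0: "d0 > 0"
    and inS: "\<forall>s. cmod s < d0 \<longrightarrow> tadd P (tscale s V) \<in> S"
    and approx: "\<forall>e>0. \<exists>d>0. \<forall>s. cmod s < d \<longrightarrow> cmod ((F (tadd P (tscale s V)) k i j - F P k i j) - s * a) \<le> e * cmod s"
  shows "L2 V k i j = a"
proof (rule ccontr)
  define b where "b = L2 V k i j"
  assume "L2 V k i j \<noteq> a"
  then have ba: "cmod (b - a) > 0" by (simp add: b_def)
  define e where "e = cmod (b - a) / 4"
  have e: "e > 0" using ba by (simp add: e_def)
  obtain d1 where d1: "d1 > 0" and H1: "\<forall>s. cmod s < d1 \<longrightarrow> tadd P (tscale s V) \<in> S \<longrightarrow>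
     cmod ((F (tadd P (tscale s V)) k i j - F P k i j) - s * b) \<le> e * cmod s"
    using tderiv_dir[OF D V idx e] unfolding b_def by blast
  obtain d2 where d2: "d2 > 0" and H2: "\<forall>s. cmod s < d2 \<longrightarrow> cmod ((F (tadd P (tscale s V)) k i j - F P k i j) - s * a) \<le> e * cmod s"
    using approx e by blast
  define r where "r = min d0 (min d1 d2) / 2"
  have r: "r > 0" "r < d0" "r < d1" "r < d2" using d0 d1 d2 by (auto simp: r_def)
  define s :: complex where "s = of_real r"
  have cs: "cmod s = r" using r by (simp add: s_def)
  define q where "q = F (tadd P (tscale s V)) k i j - F P k i j"
  have 1: "cmod (q - s * b) \<le> e * r" using H1 inS r cs unfolding q_def by auto
  have 2: "cmod (q - s * a) \<le> e * r" using H2 r cs unfolding q_def by auto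
  have "s * (b - a) = (q - s * a) - (q - s * b)" by (simp add: algebra_simps)
  then have "cmod (s * (b - a)) \<le> cmod (q - s * a) + cmod (q - s * b)" by (metis norm_triangle_ineq4)
  then have "r * cmod (b - a) \<le> 2 * e * r" using 1 2 cs by (simp add: norm_mult)
  then have "cmod (b - a) \<le> 2 * e" using r by (simp add: mult.commute)
  then show False using ba unfolding e_def by simp
qed

lemma le_all_eps: assumes "\<And>e. e > 0 \<Longrightarrow> (x::real) \<le> e * c" "c \<ge> 0" shows "x \<le> 0"
proof (rule ccontr)
  assume "\<not> x \<le> 0"
  then have x: "x > 0" by simp
  define e where "e = x / (2 * (c + 1))"
  have e: "e > 0" using x assms(2) by (simp add: e_def)
  have "e * c < x"
  proof -
    have "e * c \<le> e * (c + 1)" using e by simp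
    also have "\<dots> = x / 2" using assms(2) unfolding e_def by (simp add: field_simps)
    finally show ?thesis using x by simp
  qed
  then show False using assms(1)[OF e] by simp
qed


lemma Mblk_Z: "tadd (Mblk n X tzero X) (tscale t (Mblk n tzero H tzero)) = Mblk n X (tscale t H) X"
  by (simp add: Mblk_lin)
lemma Mblk_M0: "tadd (Mblk n X tzero X) (tscale t (Mblk n H tzero tzero)) = Mblk n (tadd X (tscale t H)) tzero X"
  by (simp add: Mblk_lin)
lemma Mblk_M1: "tadd (Mblk n X tzero X) (tscale t (Mblk n H H tzero)) = Mblk n (tadd X (tscale t H)) (tsub (tadd X (tscale t H)) X) X"
  by (simp add: Mblk_lin tsub_line)
lemma Mblk_Q: "tadd (Mblk n H tzero tzero) (Mblk n tzero H tzero) = Mblk n H H tzero"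
  by (auto simp: Mblk_def tadd_def tzero_def fun_eq_iff)

lemma kernel:
  fixes g h n :: nat and U V :: "nat \<Rightarrow> tup set" and f :: "nat \<Rightarrow> tup \<Rightarrow> tup"
    and X :: tup and L :: "tup \<Rightarrow> tup"
  assumes dU: "nc_domain g U" and dV: "nc_domain h V"
    and af: "analytic_free_map g h U V f" and pf: "proper_free_map g h U V f"
    and n: "n \<ge> 1" and X: "X \<in> U n"
    and DL: "has_tderiv g h n (U n) (f n) X L"
    and H: "H \<in> ntup g n" and LH: "L H = tzero"
  shows "H = tzero"
proof (rule ccontr)
  assume Hnz: "H \<noteq> tzero"
  have ncU: "nc_set g U" using dU by (simp add: nc_domain_def)
  have ncV: "nc_set h V" using dV by (simp add: nc_domain_def)
  have fm: "free_map g h U V f" using af by (simp add: analytic_free_map_def)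
  have n2: "2*n \<ge> 1" using n by simp
  have opn: "openin (top_of_set (ntup g m)) (U m)" if "m \<ge> 1" for m
    using dU that unfolding nc_domain_def by blast
  have dsU: "dsum m A B \<in> U (m + m)" if "m \<ge> 1" "A \<in> U m" "B \<in> U m" for m A B
    using ncU that unfolding nc_set_def by blast
  have Xn: "X \<in> ntup g n" using U_ntup[OF fm ncU ncV n X] .
  define Z where "Z t = Mblk n X (tscale t H) X" for t
  define E where "E = Mblk n tzero H tzero"
  define E0 where "E0 = Mblk n H tzero tzero"
  define Q where "Q = Mblk n H H tzero"
  define Y where "Y s = tadd X (tscale s H)" for s
  define P where "P = Z 0"
  have P: "P = Mblk n X tzero X" by (simp add: P_def Z_def)
  have PU: "P \<in> U (2*n)" using dsU[OF n X X] by (simp add: P dsum_Mblk mult_2)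
  have En: "E \<in> ntup g (2*n)" "E0 \<in> ntup g (2*n)" "Q \<in> ntup g (2*n)"
    using H by (auto simp: E_def E0_def Q_def intro!: Mblk_ntup)
  have ZP: "Z t = tadd P (tscale t E)" for t by (simp add: Z_def P E_def Mblk_Z)
  have M0P: "Mblk n (Y s) tzero X = tadd P (tscale s E0)" for s by (simp add: Y_def P E0_def Mblk_M0)
  have M1P: "Mblk n (Y s) (tsub (Y s) X) X = tadd P (tscale s Q)" for s by (simp add: Y_def P Q_def Mblk_M1)
  obtain L2 where D2: "has_tderiv g h (2*n) (U (2*n)) (f (2*n)) P L2"
    using af PU n2 unfolding analytic_free_map_def by blast
  have lin2: "tlinear g h (2*n) L2" using D2 by (simp add: has_tderiv_def)
  obtain d1 where d1: "d1 > 0" "\<forall>s. cmod s < d1 \<longrightarrow> Y s \<in> U n"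
    using line_in[OF opn[OF n] X H] unfolding Y_def by blast
  obtain d2 where d2: "d2 > 0" "\<forall>s. cmod s < d2 \<longrightarrow> tadd P (tscale s Q) \<in> U (2*n)"
    using line_in[OF opn[OF n2] PU En(3)] by blast
  obtain d3 where d3: "d3 > 0" "\<forall>s. cmod s < d3 \<longrightarrow> tadd P (tscale s E) \<in> U (2*n)"
    using line_in[OF opn[OF n2] PU En(1)] by blast
  have YU: "Mblk n (Y s) tzero X \<in> U (2*n)" if "Y s \<in> U n" for s
    using dsU[OF n that X] by (simp add: dsum_Mblk mult_2)
  have Yn: "Y s \<in> ntup g n" for s unfolding Y_def by (intro ntup_tadd ntup_tscale Xn H)
  have FP0: "f (2*n) P k i (j + n) = 0" if "i < n" "j < n" for k i j
    using ur_dsum[OF fm ncU ncV n _ X Xn that] PU by (simp add: P)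
  have fH: "\<exists>d>0. \<forall>s. cmod s < d \<longrightarrow> Y s \<in> U n \<longrightarrow> cmod (f n (Y s) k i j - f n X k i j) \<le> e * cmod s"
    if "k < h" "i < n" "j < n" "e > 0" for k i j e
  proof -
    have "L H k i j = 0" using LH by (simp add: tzero_def)
    then show ?thesis using tderiv_dir[OF DL H that] unfolding Y_def by simp
  qed
  have L2E0: "L2 E0 k i (j + n) = 0" if kij: "k < h" "i < n" "j < n" for k i j
  proof (rule dir_eq[OF D2 En(2)])
    show "k < h" "i < 2*n" "j + n < 2*n" using kij by auto
    show "d1 > 0" by (rule d1(1))
    show "\<forall>s. cmod s < d1 \<longrightarrow> tadd P (tscale s E0) \<in> U (2*n)" using d1(2) YU M0P by metis
    show "\<forall>e>0. \<exists>d>0. \<forall>s. cmod s < d \<longrightarrow> cmod (f (2*n) (tadd P (tscale s E0)) k i (j + n) - f (2*n) P k i (j + n) - s * 0) \<le> e * cmod s"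
    proof (intro allI impI exI[of _ d1] conjI)
      fix e s :: real assume "e > 0"
      show "d1 > 0" by (rule d1(1))
    next
      fix e :: real and s :: complex assume e: "e > 0" and s: "cmod s < d1"
      have "f (2*n) (tadd P (tscale s E0)) k i (j + n) = 0"
        using ur_dsum[OF fm ncU ncV n YU[OF d1(2)[rule_format, OF s]] X Yn kij(2,3)] by (simp add: M0P)
      then show "cmod (f (2*n) (tadd P (tscale s E0)) k i (j + n) - f (2*n) P k i (j + n) - s * 0) \<le> e * cmod s"
        using FP0[OF kij(2,3)] e by simp
    qed
  qed
  have L2Q: "L2 Q k i (j + n) = 0" if kij: "k < h" "i < n" "j < n" for k i j
  proof (rule dir_eq[OF D2 En(3)])
    show "k < h" "i < 2*n" "j + n < 2*n" using kij by auto
    show "min d1 d2 > 0" using d1 d2 by simp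
    show "\<forall>s. cmod s < min d1 d2 \<longrightarrow> tadd P (tscale s Q) \<in> U (2*n)" using d2(2) by simp
    show "\<forall>e>0. \<exists>d>0. \<forall>s. cmod s < d \<longrightarrow> cmod (f (2*n) (tadd P (tscale s Q)) k i (j + n) - f (2*n) P k i (j + n) - s * 0) \<le> e * cmod s"
    proof (intro allI impI)
      fix e :: real assume e: "e > 0"
      obtain d where d: "d > 0" "\<forall>s. cmod s < d \<longrightarrow> Y s \<in> U n \<longrightarrow> cmod (f n (Y s) k i j - f n X k i j) \<le> e * cmod s"
        using fH[OF kij e] by blast
      show "\<exists>d>0. \<forall>s. cmod s < d \<longrightarrow> cmod (f (2*n) (tadd P (tscale s Q)) k i (j + n) - f (2*n) P k i (j + n) - s * 0) \<le> e * cmod s"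
      proof (intro exI[of _ "min d (min d1 d2)"] conjI allI impI)
        show "min d (min d1 d2) > 0" using d d1 d2 by simp
        fix s :: complex assume s: "cmod s < min d (min d1 d2)"
        have YsU: "Y s \<in> U n" using d1(2) s by simp
        have MU: "Mblk n (Y s) (tsub (Y s) X) X \<in> U (2*n)" using d2(2) s M1P by simp
        have "f (2*n) (tadd P (tscale s Q)) k i (j + n) = f n (Y s) k i j - f n X k i j"
          using shift_rel[OF fm ncU ncV n X YsU MU YU[OF YsU] kij(2,3)] by (simp add: M1P)
        then show "cmod (f (2*n) (tadd P (tscale s Q)) k i (j + n) - f (2*n) P k i (j + n) - s * 0) \<le> e * cmod s"
          using FP0[OF kij(2,3)] d(2) s YsU by simp
      qed
    qed
  qed
  have L2E: "L2 E k i (j + n) = 0" if "k < h" "i < n" "j < n" for k i j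
  proof -
    have "L2 Q = tadd (L2 E0) (L2 E)"
      using tlinear_add[OF lin2 En(2) En(1)] by (simp add: Q_def E0_def E_def Mblk_Q)
    then have "L2 Q k i (j + n) = L2 E0 k i (j + n) + L2 E k i (j + n)" by (simp add: tadd_def)
    then show ?thesis using L2Q[OF that] L2E0[OF that] by simp
  qed
  have Dsmall: "\<exists>d>0. \<forall>s. cmod s < d \<longrightarrow> Z s \<in> U (2*n) \<longrightarrow> cmod (f (2*n) (Z s) k i (j + n)) \<le> e * cmod s"
    if "k < h" "i < n" "j < n" "e > 0" for k i j e
  proof -
    have "k < h" "i < 2*n" "j + n < 2*n" using that by auto
    from tderiv_dir[OF D2 En(1) this that(4)] show ?thesis
      using L2E[OF that(1-3)] FP0[OF that(2,3)] unfolding ZP by simp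
  qed
  define T where "T = {t. Z t \<in> U (2*n)}"
  have ZU: "Z t \<in> U (2*n)" if "cmod t < d3" for t using d3(2) that unfolding ZP by simp
  have ZT0: "f (2*n) (Z t) k i (j + n) = 0" if kij: "t \<in> T" "i < n" "j < n" for t k i j
  proof (cases "k < h")
    case False
    have "f (2*n) (Z t) \<in> ntup h (2*n)" using f_ntup[OF fm ncU ncV n2] kij(1) by (simp add: T_def)
    then show ?thesis using False by (simp add: ntup_def)
  next
    case kh: True
    have "cmod (f (2*n) (Z t) k i (j + n)) \<le> 0"
    proof (rule le_all_eps)
      show "0 \<le> cmod t" by simp
      fix e :: real assume e: "e > 0"
      obtain d where d: "d > 0" "\<forall>s. cmod s < d \<longrightarrow> Z s \<in> U (2*n) \<longrightarrow> cmod (f (2*n) (Z s) k i (j + n)) \<le> e * cmod s"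
        using Dsmall[OF kh kij(2,3) e] by blast
      show "cmod (f (2*n) (Z t) k i (j + n)) \<le> e * cmod t"
      proof (cases "t = 0")
        case True
        then show ?thesis using FP0[OF kij(2,3)] by (simp add: P_def)
      next
        case tnz: False
        define r where "r = min d d3 / 2"
        have r: "r > 0" "r < d" "r < d3" using d d3 by (auto simp: r_def)
        define s :: complex where "s = of_real r"
        have cs: "cmod s = r" using r by (simp add: s_def)
        have ZsU: "Z s \<in> U (2*n)" using ZU r cs by simp
        have ZtU: "Z t \<in> U (2*n)" using kij(1) by (simp add: T_def)
        have "f (2*n) (Z t) k i (j + n) * (s / t) = f (2*n) (Z s) k i (j + n)"
          using scale_rel[OF fm ncU ncV n X H ZtU[unfolded Z_def] ZsU[unfolded Z_def], of "s / t" i "j + n" k] tnz kij(2,3)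
          by (simp add: Z_def)
        then have "cmod (f (2*n) (Z t) k i (j + n)) * (r / cmod t) \<le> e * r"
          using d(2) r cs ZsU by (metis norm_divide norm_mult)
        then have "cmod (f (2*n) (Z t) k i (j + n)) * r \<le> e * r * cmod t"
          using tnz by (simp add: field_simps)
        then show ?thesis using r by (simp add: mult.commute mult.left_commute)
      qed
    qed
    then show ?thesis by simp
  qed
  have Hn2: "tscale t H \<in> ntup g n" for t by (rule ntup_tscale[OF H])
  have T0: "0 \<in> T" using PU by (simp add: T_def P_def)
  have ZF: "f (2*n) (Z t) = f (2*n) (Z 0)" if tT: "t \<in> T" for t
  proof (intro ext)
    fix k i j
    have ZtU: "Mblk n X (tscale t H) X \<in> U (2*n)" using tT by (simp add: T_def Z_def)
    have Z0U: "Mblk n X (tscale 0 H) X \<in> U (2*n)" using T0 by (simp add: T_def Z_def)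
    have Ft: "f (2*n) (Z t) \<in> ntup h (2*n)" "f (2*n) (Z 0) \<in> ntup h (2*n)"
      using f_ntup[OF fm ncU ncV n2] tT T0 by (auto simp: T_def)
    show "f (2*n) (Z t) k i j = f (2*n) (Z 0) k i j"
    proof (cases "j < n")
      case True
      then show ?thesis using col1[OF fm ncU ncV n ZtU X Hn2 Xn True, of k i] col1[OF fm ncU ncV n Z0U X Hn2 Xn True, of k i]
        by (simp add: Z_def)
    next
      case jn: False
      show ?thesis
      proof (cases "n \<le> i")
        case True
        then show ?thesis using row2[OF fm ncU ncV n ZtU X Hn2 Xn True, of k j] row2[OF fm ncU ncV n Z0U X Hn2 Xn True, of k j]
          by (simp add: Z_def)
      next
        case False
        then have i: "i < n" by simp
        show ?thesis
        proof (cases "j < 2*n")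
          case True
          then have "j - n < n" "j = (j - n) + n" using jn by auto
          then show ?thesis using ZT0[OF tT i, of "j - n" k] ZT0[OF T0 i, of "j - n" k] by simp
        next
          case False
          then show ?thesis using Ft by (simp add: ntup_def)
        qed
      qed
    qed
  qed
  define C where "C = {W \<in> U (2*n). f (2*n) W \<in> {f (2*n) (Z 0)}}"
  have "\<forall>n\<ge>1. \<forall>X\<in>U n. f n X \<in> V n" using fm unfolding free_map_def by (rule conjunct1)
  then have "f (2*n) (Z 0) \<in> V (2*n)" using n2 T0 unfolding T_def by simp
  then have KV: "{f (2*n) (Z 0)} \<subseteq> V (2*n) \<and> compact {f (2*n) (Z 0)}" by simp
  have "\<forall>n\<ge>1. \<forall>K. K \<subseteq> V n \<and> compact K \<longrightarrow> compact {X \<in> U n. f n X \<in> K}"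
    using pf unfolding proper_free_map_def .
  from this[rule_format, OF n2 KV] have cC: "compact C" unfolding C_def .
  have TC: "T = Z -` C"
  proof
    show "T \<subseteq> Z -` C" using ZF by (auto simp: C_def T_def)
    show "Z -` C \<subseteq> T" by (auto simp: C_def T_def)
  qed
  have contZ: "continuous_on UNIV Z" unfolding ZP by (rule cont_line)
  have clT: "closed T" unfolding TC by (rule closed_vimage[OF compact_imp_closed[OF cC] contZ])
  obtain Op where Op: "open Op" "U (2*n) = ntup g (2*n) \<inter> Op" using opn[OF n2] unfolding openin_open by blast
  have Zn: "Z t \<in> ntup g (2*n)" for t unfolding Z_def by (rule Mblk_ntup[OF Xn Hn2 Xn])
  have "T = Z -` Op" using Op Zn by (auto simp: T_def)
  then have opT: "open T" using open_vimage[OF Op(1) contZ] by simp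
  have "T = {} \<or> T = UNIV" using clopen[of T] clT opT by simp
  then have TU: "T = UNIV" using T0 by auto
  obtain k0 i0 j0 where h0: "H k0 i0 j0 \<noteq> 0" using Hnz by (auto simp: tzero_def fun_eq_iff)
  have idx0: "i0 < n" "j0 < n" using h0 ntup_zero[OF H, of k0 i0 j0] by (meson not_le)+
  define \<pi> :: "tup \<Rightarrow> complex" where "\<pi> W = W k0 i0 (j0 + n)" for W
  have "continuous_on UNIV (\<lambda>W::tup. W k0)" by simp
  then have "continuous_on UNIV (\<lambda>W::tup. W k0 i0)" by (rule continuous_on_product_then_coordinatewise)
  then have "continuous_on UNIV \<pi>" unfolding \<pi>_def by (rule continuous_on_product_then_coordinatewise)
  then have "compact (\<pi> ` C)" by (rule compact_continuous_image[OF continuous_on_subset[OF _ subset_UNIV] cC])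
  then have "bounded (\<pi> ` C)" by (rule compact_imp_bounded)
  then obtain B where B: "\<forall>w\<in>\<pi> ` C. norm w \<le> B" unfolding bounded_iff by blast
  define t :: complex where "t = of_real ((\<bar>B\<bar> + 1) / cmod (H k0 i0 j0))"
  have "Z t \<in> C" using TU TC by blast
  then have "norm (\<pi> (Z t)) \<le> B" using B by blast
  moreover have "\<pi> (Z t) = t * H k0 i0 j0" using idx0 by (simp add: \<pi>_def Z_def Mblk_def tscale_def)
  moreover have "norm (t * H k0 i0 j0) = \<bar>B\<bar> + 1"
  proof -
    have "norm t = (\<bar>B\<bar> + 1) / cmod (H k0 i0 j0)" unfolding t_def norm_of_real by simp
    then show ?thesis using h0 by (simp add: norm_mult del: of_real_add of_real_divide)
  qed
  ultimately show False by simp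
qed


lemma tadd_plus: "tadd X Y = X + Y" by (simp add: tadd_def fun_eq_iff)
lemma tzero_zero: "tzero = 0" by (simp add: tzero_def fun_eq_iff zero_fun_def)

lemma sum_apply3: "finite A \<Longrightarrow> (\<Sum>p\<in>A. F p) k i j = (\<Sum>p\<in>A. (F p :: tup) k i j)"
  by (induction A rule: finite_induct) (auto simp: zero_fun_def)

definition unit3 :: "nat \<times> nat \<times> nat \<Rightarrow> tup" where
  "unit3 p = (\<lambda>k i j. if (k, i, j) = p then 1 else 0)"

lemma surj_part:
  assumes lin: "tlinear g g n L" and inj: "inj_on L (ntup g n)"
  shows "ntup g n \<subseteq> L ` ntup g n"
proof -
  interpret VS: vector_space "tscale :: complex \<Rightarrow> tup \<Rightarrow> tup"
    by unfold_locales (auto simp: tscale_def fun_eq_iff algebra_simps)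
  define pr :: "tup \<Rightarrow> tup" where "pr x = (\<lambda>k i j. if k < g \<and> i < n \<and> j < n then x k i j else 0)" for x
  have prn: "pr x \<in> ntup g n" for x by (simp add: pr_def ntup_def)
  have prid: "x \<in> ntup g n \<Longrightarrow> pr x = x" for x by (auto simp: pr_def ntup_def fun_eq_iff)
  define L' where "L' x = L (pr x)" for x
  have L'L: "x \<in> ntup g n \<Longrightarrow> L' x = L x" for x by (simp add: L'_def prid)
  have "Vector_Spaces.linear tscale tscale L'"
    unfolding Vector_Spaces.linear_iff
  proof (intro conjI allI)
    show "vector_space (tscale :: complex \<Rightarrow> tup \<Rightarrow> tup)" by (rule VS.vector_space_axioms)
    then show "vector_space (tscale :: complex \<Rightarrow> tup \<Rightarrow> tup)" .
    fix x y :: tup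
    have "pr (x + y) = tadd (pr x) (pr y)" by (auto simp: pr_def tadd_def fun_eq_iff)
    then show "L' (x + y) = L' x + L' y" unfolding L'_def
      using tlinear_add[OF lin prn prn] by (simp add: tadd_plus)
  next
    fix c :: complex and x :: tup
    have "pr (tscale c x) = tscale c (pr x)" by (auto simp: pr_def tscale_def fun_eq_iff)
    then show "L' (tscale c x) = tscale c (L' x)" unfolding L'_def
      using tlinear_scale[OF lin prn] by simp
  qed
  then interpret LL: Vector_Spaces.linear "tscale :: complex \<Rightarrow> tup \<Rightarrow> tup" tscale L' .
  have sub: "VS.subspace (ntup g n)"
    unfolding VS.subspace_def using ntup_tadd[of _ g n] ntup_tscale[of _ g n]
    by (auto simp: tadd_plus tzero_zero[symmetric])
  define I where "I = {..<g} \<times> {..<n} \<times> {..<n}"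
  have fI: "finite I" by (simp add: I_def)
  define E0 where "E0 = unit3 ` I"
  have fE0: "finite E0" using fI by (simp add: E0_def)
  have spE0: "ntup g n \<subseteq> VS.span E0"
  proof
    fix x assume x: "x \<in> ntup g n"
    define c where "c p = x (fst p) (fst (snd p)) (snd (snd p))" for p
    have "(\<Sum>p\<in>I. tscale (c p) (unit3 p)) = x"
    proof (intro ext)
      fix k i j
      have "(\<Sum>p\<in>I. tscale (c p) (unit3 p)) k i j = (\<Sum>p\<in>I. tscale (c p) (unit3 p) k i j)"
        by (rule sum_apply3[OF fI])
      also have "\<dots> = (\<Sum>p\<in>I. if p = (k, i, j) then x k i j else 0)"
        by (intro sum.cong) (auto simp: tscale_def unit3_def c_def)
      also have "\<dots> = x k i j"
        using fI ntup_zero[OF x, of k i j] by (auto simp: I_def)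
      finally show "(\<Sum>p\<in>I. tscale (c p) (unit3 p)) k i j = x k i j" .
    qed
    moreover have "(\<Sum>p\<in>I. tscale (c p) (unit3 p)) \<in> VS.span E0"
      by (intro VS.span_sum VS.span_scale VS.span_base) (simp add: E0_def)
    ultimately show "x \<in> VS.span E0" by simp
  qed
  obtain B where B: "B \<subseteq> ntup g n" "VS.independent B" "ntup g n \<subseteq> VS.span B"
    using VS.maximal_independent_subset by blast
  have "finite B \<and> card B \<le> card E0"
    using VS.independent_span_bound[OF fE0 B(2)] B(1) spE0 by blast
  then have fB: "finite B" by blast
  have spB: "VS.span B \<subseteq> ntup g n" by (rule VS.span_minimal[OF B(1) sub])
  have injB: "inj_on L' (VS.span B)"
    using inj spB L'L unfolding inj_on_def by (metis subsetD)
  have indLB: "VS.independent (L' ` B)" by (rule LL.independent_injective_image[OF B(2) injB])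
  have cLB: "card (L' ` B) = card B"
    using injB VS.span_superset by (metis card_image inj_on_subset)
  have LBn: "L' ` B \<subseteq> ntup g n"
    using B(1) L'L lin unfolding tlinear_def by auto
  have "ntup g n \<subseteq> VS.span (L' ` B)"
  proof
    fix a assume a: "a \<in> ntup g n"
    show "a \<in> VS.span (L' ` B)"
    proof (rule ccontr)
      assume na: "a \<notin> VS.span (L' ` B)"
      then have ind: "VS.independent (insert a (L' ` B))" using VS.independent_insertI indLB by blast
      have "insert a (L' ` B) \<subseteq> VS.span B" using a LBn B(3) by blast
      then have "card (insert a (L' ` B)) \<le> card B"
        using VS.independent_span_bound[OF fB ind] by blast
      moreover have "a \<notin> L' ` B" using na VS.span_base by blast
      ultimately show False using cLB fB by simp
    qed
  qed
  also have "VS.span (L' ` B) = L' ` VS.span B" by (rule LL.span_image)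
  also have "\<dots> \<subseteq> L ` ntup g n" using spB L'L by force
  finally show ?thesis .
qed

theorem proposition3p4:
  fixes g h n :: nat and U V :: "nat \<Rightarrow> tup set" and f :: "nat \<Rightarrow> tup \<Rightarrow> tup"
    and X :: tup and L :: "tup \<Rightarrow> tup"
  assumes "nc_domain g U" and "nc_domain h V"
    and "analytic_free_map g h U V f" and "proper_free_map g h U V f"
    and "n \<ge> 1" and "X \<in> U n"
    and "has_tderiv g h n (U n) (f n) X L"
  shows "inj_on L (ntup g n) \<and> (g = h \<longrightarrow> bij_betw L (ntup g n) (ntup h n))"
proof -
  have lin: "tlinear g h n L" using assms(7) by (simp add: has_tderiv_def)
  have inj: "inj_on L (ntup g n)"
  proof (rule inj_onI)
    fix H1 H2 assume H1: "H1 \<in> ntup g n" and H2: "H2 \<in> ntup g n" and eq: "L H1 = L H2"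
    define D where "D = tadd (tscale (-1) H2) H1"
    have Dn: "D \<in> ntup g n" unfolding D_def by (intro ntup_tadd ntup_tscale H1 H2)
    have "L D = tadd (tscale (-1) (L H2)) (L H1)"
      using lin H1 H2 unfolding tlinear_def D_def by blast
    then have "L D = tzero" using eq by (simp add: tadd_def tscale_def tzero_def)
    then have "D = tzero" by (rule kernel[OF assms Dn])
    then show "H1 = H2" unfolding D_def by (auto simp: tadd_def tscale_def tzero_def fun_eq_iff)
  qed
  moreover have "g = h \<longrightarrow> bij_betw L (ntup g n) (ntup h n)"
  proof
    assume gh: "g = h"
    have "L ` ntup g n \<subseteq> ntup h n" using lin unfolding tlinear_def by auto
    moreover have "ntup g n \<subseteq> L ` ntup g n" using surj_part[of g n L] lin inj gh by simp
    ultimately show "bij_betw L (ntup g n) (ntup h n)" using inj gh by (simp add: bij_betw_def)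
  qed
  ultimately show ?thesis by blast
qed

end
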